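(* Let $(V,o)$ be a normal surface singularity of degree $d\in\{2,3\}$ (i.e. $Z^2=-d$) with $p=p_f(V,o)>0$, where $Z$ is the fundamental cycle on the minimal resolution. Assume that $Z$ is essentially irreducible and $Z=Z_{min}$. Then $$p_a(V,o)=p_a\Big(\big(\big[\tfrac{p-1}{d}\big]+1\big)Z\Big)=\frac d2\Big(\frac{2p-2}{d}-\big[\tfrac{p-1}{d}\big]\Big)\Big(\big[\tfrac{p-1}{d}\big]+1\Big)+1.$$
   Context: $[a]=\max\{n\in\mathbb Z\mid n\le a\}$. Let $\pi\colon X\to V$ be the minimal resolution and $\pi^{-1}(o)=\bigcup_{i=1}^nE_i$ the irreducible components of the exceptional set. A cycle is $D=\sum d_iE_i$, $d_i\in\mathbb Z$; $D_1\le D_2$ is coefficientwise. $K$ is the canonical divisor of $X$; $p_a(D)=1+\frac12(D^2+D\cdot K)$ for $D>0$. The fundamental cycle $Z$ is the smallest cycle $D>0$ with support $\pi^{-1}(o)$ and $D\cdot E_i\le0$ for all $i$; $p_f(V,o)=p_a(Z)$; the degree is $-Z^2$; $p_a(V,o)=\max\{p_a(D)\mid D>0\text{ a cycle}\}$. $Z_{min}$ is the unique minimal cycle $0<Z_{min}\le Z$ with $p_a(Z_{min})=p_a(Z)$. A $(-2)$-curve is a smooth rational exceptional curve $E$ with $E^2=-2$. $Z$ is essentially irreducible if there is a component $A\le Z$ which is not a $(-2)$-curve such that, with $k$ the coefficient of $A$ in $Z$, either $Z=kA$ or all components of $Z-kA$ are $(-2)$-curves. *)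

theory Defs
  imports Complex_Main
begin

text \<open>Combinatorial data of the exceptional set of the minimal resolution:
  components indexed by a finite type 'e, intersection numbers M i j = E_i . E_j,
  arithmetic genera g i = p_a(E_i).\<close>

definition comp :: "'e \<Rightarrow> ('e \<Rightarrow> int)" where
  "comp i = (\<lambda>j. if j = i then 1 else 0)"

definition inter :: "('e::finite \<Rightarrow> 'e \<Rightarrow> int) \<Rightarrow> ('e \<Rightarrow> int) \<Rightarrow> ('e \<Rightarrow> int) \<Rightarrow> int" where
  "inter M D1 D2 = (\<Sum>i\<in>UNIV. \<Sum>j\<in>UNIV. D1 i * D2 j * M i j)"

text \<open>K . E_i via adjunction: p_a(E_i) = 1 + (E_i^2 + K.E_i)/2.\<close>
definition canonE :: "('e \<Rightarrow> 'e \<Rightarrow> int) \<Rightarrow> ('e \<Rightarrow> int) \<Rightarrow> 'e \<Rightarrow> int" where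
  "canonE M g i = 2 * g i - 2 - M i i"

definition canonD :: "('e::finite \<Rightarrow> 'e \<Rightarrow> int) \<Rightarrow> ('e \<Rightarrow> int) \<Rightarrow> ('e \<Rightarrow> int) \<Rightarrow> int" where
  "canonD M g D = (\<Sum>i\<in>UNIV. D i * canonE M g i)"

text \<open>p_a(D) = 1 + (D^2 + D.K)/2 (the numerator is always even).\<close>
definition pa :: "('e::finite \<Rightarrow> 'e \<Rightarrow> int) \<Rightarrow> ('e \<Rightarrow> int) \<Rightarrow> ('e \<Rightarrow> int) \<Rightarrow> int" where
  "pa M g D = 1 + (inter M D D + canonD M g D) div 2"

definition pos_cycle :: "('e \<Rightarrow> int) \<Rightarrow> bool" where
  "pos_cycle D \<longleftrightarrow> (\<forall>i. D i \<ge> 0) \<and> D \<noteq> (\<lambda>_. 0)"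

definition exc_config :: "('e::finite \<Rightarrow> 'e \<Rightarrow> int) \<Rightarrow> ('e \<Rightarrow> int) \<Rightarrow> bool" where
  "exc_config M g \<longleftrightarrow>
     (\<forall>i j. M i j = M j i) \<and> (\<forall>i j. i \<noteq> j \<longrightarrow> M i j \<ge> 0) \<and> (\<forall>i. g i \<ge> 0) \<and>
     (\<forall>D. D \<noteq> (\<lambda>_. 0) \<longrightarrow> inter M D D < 0) \<and>
     (\<forall>S. S \<noteq> {} \<and> S \<noteq> UNIV \<longrightarrow> (\<exists>i\<in>S. \<exists>j. j \<notin> S \<and> M i j > 0))"

text \<open>Minimality of the resolution: no smooth rational (-1)-curve.\<close>
definition minimal_res :: "('e \<Rightarrow> 'e \<Rightarrow> int) \<Rightarrow> ('e \<Rightarrow> int) \<Rightarrow> bool" where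
  "minimal_res M g \<longleftrightarrow> (\<forall>i. \<not> (g i = 0 \<and> M i i = -1))"

definition fundamental_cycle :: "('e::finite \<Rightarrow> 'e \<Rightarrow> int) \<Rightarrow> ('e \<Rightarrow> int) \<Rightarrow> bool" where
  "fundamental_cycle M Z \<longleftrightarrow>
     (\<forall>i. Z i > 0) \<and> (\<forall>i. inter M Z (comp i) \<le> 0) \<and>
     (\<forall>D. (\<forall>i. D i > 0) \<and> (\<forall>i. inter M D (comp i) \<le> 0) \<longrightarrow> (\<forall>i. Z i \<le> D i))"

definition minus2 :: "('e \<Rightarrow> 'e \<Rightarrow> int) \<Rightarrow> ('e \<Rightarrow> int) \<Rightarrow> 'e \<Rightarrow> bool" where
  "minus2 M g i \<longleftrightarrow> g i = 0 \<and> M i i = -2"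

definition ess_irreducible :: "('e \<Rightarrow> 'e \<Rightarrow> int) \<Rightarrow> ('e \<Rightarrow> int) \<Rightarrow> ('e \<Rightarrow> int) \<Rightarrow> bool" where
  "ess_irreducible M g Z \<longleftrightarrow>
     (\<exists>A. Z A > 0 \<and> \<not> minus2 M g A \<and>
        (let R = (\<lambda>j. Z j - Z A * comp A j) in
          R = (\<lambda>_. 0) \<or> (\<forall>j. R j > 0 \<longrightarrow> minus2 M g j)))"

definition is_Zmin :: "('e::finite \<Rightarrow> 'e \<Rightarrow> int) \<Rightarrow> ('e \<Rightarrow> int) \<Rightarrow> ('e \<Rightarrow> int) \<Rightarrow> bool" where
  "is_Zmin M g Z \<longleftrightarrow>
     (\<forall>D. pos_cycle D \<and> (\<forall>i. D i \<le> Z i) \<and> pa M g D = pa M g Z \<longrightarrow> D = Z)"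

definition sing_pa :: "('e::finite \<Rightarrow> 'e \<Rightarrow> int) \<Rightarrow> ('e \<Rightarrow> int) \<Rightarrow> int" where
  "sing_pa M g = Sup (pa M g ` {D. pos_cycle D})"

end

theory Submission imports Defs begin

lemma mult_if_lem: "(a::int) * (if P then 1 else 0) * b = (if P then a * b else 0)"
  "(if P then 1 else 0) * (b::int) = (if P then b else 0)" "a * (if P then 1 else 0) = (if P then a else 0)"
  "(if P then a else (0::int)) * b = (if P then a * b else 0)"
  by simp_all

lemma inter_comp_right: "inter M D (comp j) = (\<Sum>i\<in>UNIV. D i * M i j)"
  unfolding inter_def comp_def by (simp add: mult_if_lem)

lemma inter_expand2: "inter M D E = (\<Sum>j\<in>UNIV. E j * inter M D (comp j))"
  unfolding inter_comp_right unfolding inter_def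
  by (subst sum.swap) (simp add: sum_distrib_left algebra_simps)

lemma inter_sym: assumes "\<forall>i j. M i j = M j i" shows "inter M D E = inter M E D"
  unfolding inter_def using assms
  by (subst sum.swap) (simp add: algebra_simps)

lemma inter_lin1: "inter M (\<lambda>i. x * D i + y * E i) F = x * inter M D F + y * inter M E F"
  unfolding inter_def by (simp add: algebra_simps sum.distrib sum_distrib_left)

lemma inter_lin2: "inter M F (\<lambda>i. x * D i + y * E i) = x * inter M F D + y * inter M F E"
  unfolding inter_def by (simp add: algebra_simps sum.distrib sum_distrib_left)

lemma canonD_lin: "canonD M g (\<lambda>i. x * D i + y * E i) = x * canonD M g D + y * canonD M g E"
  unfolding canonD_def by (simp add: algebra_simps sum.distrib sum_distrib_left)

lemma inter_quad:
  assumes "\<forall>i j. M i j = M j i"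
  shows "inter M (\<lambda>i. x * D i + y * E i) (\<lambda>i. x * D i + y * E i)
     = x*x*inter M D D + 2*x*y*inter M D E + y*y*inter M E E"
  using inter_sym[OF assms, of E D]
  by (simp add: inter_lin1 inter_lin2 algebra_simps)

lemma inter_comp_comp: "inter M (comp j) (comp i) = M j i"
  unfolding inter_comp_right by (simp add: comp_def mult_if_lem)

lemma canonD_comp: "canonD M g (comp j) = canonE M g j"
  unfolding canonD_def by (simp add: comp_def mult_if_lem)

lemma sym_sum_even:
  assumes "finite S" "\<forall>i j. f i j = f j i"
  shows "even ((\<Sum>i\<in>S. \<Sum>j\<in>S. f i j) - (\<Sum>i\<in>S. f i i :: int))"
  using assms(1)
proof (induction S rule: finite_induct)
  case empty then show ?case by simp
next
  case (insert x S)
  have "(\<Sum>i\<in>insert x S. \<Sum>j\<in>insert x S. f i j) - (\<Sum>i\<in>insert x S. f i i)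
      = ((\<Sum>i\<in>S. \<Sum>j\<in>S. f i j) - (\<Sum>i\<in>S. f i i)) + 2 * (\<Sum>j\<in>S. f x j)"
    using insert(1,2) assms(2) by (simp add: sum.distrib algebra_simps)
  then show ?case using insert(3) by simp
qed

lemma Q_even:
  assumes "\<forall>i j. M i j = M j i"
  shows "even (inter M D D + canonD M g (D :: 'e::finite \<Rightarrow> int))"
proof -
  have e1: "even (inter M D D - (\<Sum>i\<in>UNIV. D i * D i * M i i))"
    unfolding inter_def using sym_sum_even[of UNIV "\<lambda>i j. D i * D j * M i j"] assms
    by (simp add: algebra_simps)
  have e2: "even (\<Sum>i\<in>UNIV. D i * D i * M i i + D i * canonE M g i)"
  proof (rule dvd_sum)
    fix i
    have "D i * D i * M i i + D i * canonE M g i = (D i * (D i - 1)) * M i i + 2 * (D i * (g i - 1))"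
      unfolding canonE_def by (simp add: algebra_simps)
    then show "2 dvd D i * D i * M i i + D i * canonE M g i" by simp
  qed
  have eq: "inter M D D + canonD M g D = (inter M D D - (\<Sum>i\<in>UNIV. D i * D i * M i i))
      + (\<Sum>i\<in>UNIV. D i * D i * M i i + D i * canonE M g i)"
    unfolding canonD_def by (simp add: sum.distrib)
  show ?thesis unfolding eq by (rule dvd_add[OF e1 e2])
qed

lemma pa_2: assumes "\<forall>i j. M i j = M j i"
  shows "2 * (pa M g D - 1) = inter M D D + canonD M g D"
proof -
  obtain t where t: "inter M D D + canonD M g D = 2 * t" using Q_even[OF assms, of D g] by blast
  show ?thesis unfolding pa_def t by simp
qed

lemma exc_sym: "exc_config M g \<Longrightarrow> \<forall>i j. M i j = M j i"
  unfolding exc_config_def by (rule conjunct1)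
lemma exc_offd: "exc_config M g \<Longrightarrow> \<forall>i j. i \<noteq> j \<longrightarrow> M i j \<ge> 0"
  unfolding exc_config_def by (drule conjunct2, rule conjunct1)
lemma exc_neg: "exc_config M g \<Longrightarrow> \<forall>D. D \<noteq> (\<lambda>_. 0) \<longrightarrow> inter M D D < 0"
  unfolding exc_config_def by (drule conjunct2, drule conjunct2, drule conjunct2, rule conjunct1)
lemma exc_conn: "exc_config M g \<Longrightarrow> \<forall>S. S \<noteq> {} \<and> S \<noteq> UNIV \<longrightarrow> (\<exists>i\<in>S. \<exists>j. j \<notin> S \<and> M i j > 0)"
  unfolding exc_config_def by (drule conjunct2, drule conjunct2, drule conjunct2, drule conjunct2)

lemma antinef_pos:
  assumes ex: "exc_config M g" and nn: "\<forall>i. D i \<ge> 0" and nz: "D \<noteq> (\<lambda>_. 0)"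
    and an: "\<forall>i. inter M D (comp i) \<le> 0"
  shows "\<forall>i. D i > 0"
proof (rule ccontr)
  assume "\<not> (\<forall>i. D i > 0)"
  then obtain i0 where "\<not> D i0 > 0" by auto
  then have "D i0 = 0" using nn[rule_format, of i0] by simp
  then have S1: "{i. D i = 0} \<noteq> {}" by auto
  have S2: "{i. D i = 0} \<noteq> UNIV" using nz by auto
  note conn = exc_conn[OF ex] and symm = exc_sym[OF ex] and offd = exc_offd[OF ex]
  obtain i j where ij: "i \<in> {i. D i = 0}" "j \<notin> {i. D i = 0}" "M i j > 0"
    using conn[rule_format, of "{i. D i = 0}"] S1 S2 by blast
  have sym: "M j i = M i j" using symm by simp
  have Dj: "D j > 0" using ij nn by (simp add: order.not_eq_order_implies_strict)
  have "D j * M j i \<le> (\<Sum>k\<in>UNIV. D k * M k i)"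
  proof (rule member_le_sum)
    fix k assume "k \<in> UNIV - {j}"
    show "0 \<le> D k * M k i"
    proof (cases "k = i")
      case True then show ?thesis using ij by simp
    next
      case False then show ?thesis using nn[rule_format, of k] offd[rule_format, of k i] by simp
    qed
  qed auto
  moreover have "D j * M j i > 0" using Dj ij sym by simp
  ultimately show False using an[rule_format, of i] unfolding inter_comp_right by linarith
qed

lemma ar1:
  fixes d p X a P q :: int
  assumes "d > 0" "p \<ge> 1" "q = (p-1) div d" "X + a*a*d \<le> 0" "2*(P-1) \<le> X + a*(2*p-2+d)"
  shows "2*(P-1) \<le> -(q+1)*(q+1)*d + (q+1)*(2*p-2+d)"
proof -
  define r where "r = p - 1 - d*q"
  have rm: "r = (p-1) mod d" unfolding r_def assms(3) by (simp add: minus_div_mult_eq_mod[symmetric] mult.commute)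
  have r: "0 \<le> r" "r < d" using assms unfolding rm by simp_all
  have key: "(q+1-a)*(2*r + d*(q-a)) \<ge> 0"
  proof (cases "a \<le> q")
    case True then show ?thesis using r assms by (intro mult_nonneg_nonneg) auto
  next
    case False
    show ?thesis
    proof (cases "a = q+1")
      case True then show ?thesis by simp
    next
      case False2: False
      then have "q+1-a \<le> 0" using False by auto
      moreover have "2*r + d*(q-a) \<le> 0"
      proof -
        have "d*(q-a) \<le> d*(-2)" using False False2 assms by (intro mult_left_mono) auto
        then show ?thesis using r by linarith
      qed
      ultimately show ?thesis by (simp add: mult_nonpos_nonpos)
    qed
  qed
  have "-(q+1)*(q+1)*d + (q+1)*(2*p-2+d) - (-a*a*d + a*(2*p-2+d)) = (q+1-a)*(2*r + d*(q-a))"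
    unfolding r_def by (simp add: algebra_simps)
  then show ?thesis using key assms by linarith
qed

lemma aux4: "4*(x::int) \<le> 4*w+1 \<Longrightarrow> x \<le> w" by presburger

lemma ar2:
  fixes p X a P q k :: int
  assumes "p \<ge> 1" "q = (p-1) div 2" "4*X + a*a*2 \<le> 0" "2*(P-1) \<le> X + a*k" "2*(p-1) = 2*k - 2"
  shows "2*(P-1) \<le> -(q+1)*(q+1)*2 + (q+1)*2*k"
proof -
  have k: "k = p" using assms by simp
  have "2*(P-1) \<le> X + a*p" using assms(4) k by simp
  then have "4*(P-1) \<le> 2*a*p - a*a" using assms(3) by linarith
  also have "\<dots> = p*p - (a-p)*(a-p)" by (simp add: algebra_simps)
  also have "\<dots> \<le> p*p" by simp
  finally have h: "4*(P-1) \<le> p*p" .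
  show ?thesis
  proof (cases "even p")
    case True
    then obtain m where m: "p = 2*m" by auto
    have "q = m - 1" using assms m by simp
    then show ?thesis using h m k by (simp add: algebra_simps)
  next
    case False
    then obtain m where m: "p = 2*m+1" by (metis oddE)
    have "q = m" using assms m by simp
    have "4*(P-1) \<le> 4*(m*m+m) + 1" using h m by (simp add: algebra_simps)
    then have "P - 1 \<le> m*m+m" using aux4 by blast
    then show ?thesis using \<open>q = m\<close> m k by (simp add: algebra_simps)
  qed
qed

lemma ar3:
  fixes p X a P q k :: int
  assumes "p \<ge> 1" "q = (p-1) div 3" "9*X + a*a*3 \<le> 0" "2*(P-1) \<le> X + a*k" "2*(p-1) = 3*k - 3"
  shows "2*(P-1) \<le> -(q+1)*(q+1)*3 + (q+1)*3*k"
proof -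
  have "3 dvd (p - 1)" using assms(5) by presburger
  then obtain m where m: "p - 1 = 3*m" by auto
  have q: "q = m" using assms m by simp
  have k: "k = 2*m+1" using assms m by simp
  have h: "6*(P-1) \<le> a*(6*m+3) - a*a" using assms k by (simp add: algebra_simps)
  have pr: "(a - (3*m+1))*(a-(3*m+2)) \<ge> 0"
  proof (cases "a \<le> 3*m+1")
    case True then show ?thesis by (intro mult_nonpos_nonpos) auto
  next
    case False then show ?thesis by (intro mult_nonneg_nonneg) auto
  qed
  have "6*(P-1) \<le> 9*m*m + 9*m + 2" using h pr by (simp add: algebra_simps)
  moreover have "even (m*m+m)" by simp
  then obtain t where "m*m+m = 2*t" by blast
  ultimately have "6*(P-1) \<le> 6*(3*t) + 2" by (simp add: algebra_simps)
  then have "P - 1 \<le> 3*t" by presburger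
  then show ?thesis using q k \<open>m*m+m = 2*t\<close> by (simp add: algebra_simps)
qed

lemma inter_scale: "inter M (\<lambda>i. n * D i) (\<lambda>i. n * D i) = n * n * inter M D D"
proof -
  have "inter M (\<lambda>i. n * D i) (\<lambda>i. n * D i) = (\<Sum>i\<in>UNIV. \<Sum>j\<in>UNIV. n * n * (D i * D j * M i j))"
    unfolding inter_def by (intro sum.cong refl) (simp add: algebra_simps)
  also have "\<dots> = n * n * inter M D D" by (simp add: inter_def sum_distrib_left)
  finally show ?thesis .
qed

lemma canonD_scale: "canonD M g (\<lambda>i. n * D i) = n * canonD M g D"
proof -
  have "canonD M g (\<lambda>i. n * D i) = (\<Sum>i\<in>UNIV. n * (D i * canonE M g i))"
    unfolding canonD_def by (intro sum.cong refl) (simp add: algebra_simps)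
  also have "\<dots> = n * canonD M g D" by (simp add: canonD_def sum_distrib_left)
  finally show ?thesis .
qed

lemma inter_le0: assumes "exc_config M g" shows "inter M D D \<le> 0"
proof (cases "D = (\<lambda>_. 0)")
  case True then show ?thesis by (simp add: inter_def)
next
  case False
  have "\<forall>D. D \<noteq> (\<lambda>_. 0) \<longrightarrow> inter M D D < 0" using exc_neg[OF assms] .
  then have "inter M D D < 0" using False by blast
  then show ?thesis by simp
qed

theorem lemma3p12:
  fixes M :: "'e::finite \<Rightarrow> 'e \<Rightarrow> int" and g :: "'e \<Rightarrow> int"
    and Z :: "'e \<Rightarrow> int" and d :: int
  assumes "exc_config M g" and "minimal_res M g"
    and "fundamental_cycle M Z"
    and "d = - inter M Z Z" and "d \<in> {2, 3}"
    and "pa M g Z > 0"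
    and "ess_irreducible M g Z"
    and "is_Zmin M g Z"
  shows "sing_pa M g = pa M g (\<lambda>i. (\<lfloor>real_of_int (pa M g Z - 1) / real_of_int d\<rfloor> + 1) * Z i)
    \<and> real_of_int (pa M g (\<lambda>i. (\<lfloor>real_of_int (pa M g Z - 1) / real_of_int d\<rfloor> + 1) * Z i))
      = real_of_int d / 2
        * ((2 * real_of_int (pa M g Z) - 2) / real_of_int d
           - real_of_int \<lfloor>real_of_int (pa M g Z - 1) / real_of_int d\<rfloor>)
        * (real_of_int \<lfloor>real_of_int (pa M g Z - 1) / real_of_int d\<rfloor> + 1) + 1"
proof -
  note ex = assms(1)
  have sym: "\<forall>i j. M i j = M j i" using exc_sym[OF ex] .
  have offd: "\<And>i j. i \<noteq> j \<Longrightarrow> M i j \<ge> 0" using exc_offd[OF ex] by blast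
  note FC = assms(3)[unfolded fundamental_cycle_def]
  have Zpos: "\<And>i. Z i > 0" using conjunct1[OF FC] by blast
  have Znef: "\<And>i. inter M Z (comp i) \<le> 0" using conjunct1[OF conjunct2[OF FC]] by blast
  have Zmin: "\<And>D. (\<forall>i. D i > 0) \<Longrightarrow> (\<forall>i. inter M D (comp i) \<le> 0) \<Longrightarrow> (\<forall>i. Z i \<le> D i)"
    using conjunct2[OF conjunct2[OF FC]] by blast
  obtain A where A: "Z A > 0" "\<not> minus2 M g A"
    and R: "(\<lambda>j. Z j - Z A * comp A j) = (\<lambda>_. 0) \<or> (\<forall>j. Z j - Z A * comp A j > 0 \<longrightarrow> minus2 M g j)"
    using assms(7) unfolding ess_irreducible_def Let_def by blast
  have m2: "minus2 M g j" if "j \<noteq> A" for j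
  proof -
    have e: "Z j - Z A * comp A j = Z j" using that by (simp add: comp_def)
    show ?thesis
    proof (cases "(\<lambda>j. Z j - Z A * comp A j) = (\<lambda>_. 0)")
      case True
      then have "Z j - Z A * comp A j = 0" by meson
      then show ?thesis using e Zpos[of j] by simp
    next
      case False
      then show ?thesis using R e Zpos[of j] by auto
    qed
  qed
  have kap0: "canonE M g j = 0" if "j \<noteq> A" for j
    using m2[OF that] unfolding canonE_def minus2_def by simp
  have canonA: "canonD M g D = D A * canonE M g A" for D
  proof -
    have "canonD M g D = (\<Sum>i\<in>UNIV. if i = A then D A * canonE M g A else 0)"
      unfolding canonD_def by (rule sum.cong) (auto simp: kap0)
    then show ?thesis by simp
  qed
  have zj0: "inter M Z (comp j) = 0" if jA: "j \<noteq> A" for j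
  proof -
    define D where "D = (\<lambda>i. 1 * Z i + (-1) * comp j i)"
    have Dj: "D j = Z j - 1" and Di: "\<And>i. i \<noteq> j \<Longrightarrow> D i = Z i"
      unfolding D_def comp_def by auto
    have Dnn: "\<forall>i. D i \<ge> 0"
    proof
      fix i show "D i \<ge> 0" using Zpos[of i] Zpos[of j] Dj Di[of i] by (cases "i = j") auto
    qed
    have Dnz: "D \<noteq> (\<lambda>_. 0)"
    proof
      assume "D = (\<lambda>_. 0)"
      then have "D A = 0" by simp
      then show False using Di[of A] jA A by simp
    qed
    have DE: "inter M D (comp i) = inter M Z (comp i) - M j i" for i
      unfolding D_def inter_lin1 inter_comp_comp by simp
    have DD: "inter M D D = inter M Z Z - 2 * inter M Z (comp j) + M j j"
      unfolding D_def inter_quad[OF sym] inter_comp_comp by simp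
    have DK: "canonD M g D = canonD M g Z"
      unfolding D_def canonD_lin canonD_comp using kap0[OF jA] by simp
    have Mjj: "M j j = -2" using m2[OF jA] unfolding minus2_def by simp
    have z1: "inter M Z (comp j) \<noteq> -1"
    proof
      assume h: "inter M Z (comp j) = -1"
      have "pa M g D = pa M g Z" unfolding pa_def DD DK h Mjj by simp
      moreover have "pos_cycle D" unfolding pos_cycle_def using Dnn Dnz by simp
      moreover have "\<forall>i. D i \<le> Z i"
      proof
        fix i show "D i \<le> Z i" using Dj Di[of i] by (cases "i = j") auto
      qed
      ultimately have "D = Z" using assms(8) unfolding is_Zmin_def by blast
      then have "D j = Z j" by simp
      then show False using Dj by simp
    qed
    have z2: "\<not> inter M Z (comp j) \<le> -2"
    proof
      assume h: "inter M Z (comp j) \<le> -2"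
      have "\<forall>i. inter M D (comp i) \<le> 0"
      proof
        fix i
        show "inter M D (comp i) \<le> 0"
        proof (cases "i = j")
          case True then show ?thesis using h Mjj DE[of i] by simp
        next
          case False then show ?thesis using DE[of i] Znef[of i] offd[of j i] by simp
        qed
      qed
      then have "\<forall>i. D i > 0" using antinef_pos[OF ex Dnn Dnz] by blast
      then have "Z j \<le> D j" using Zmin \<open>\<forall>i. inter M D (comp i) \<le> 0\<close> by blast
      then show False using Dj by simp
    qed
    show ?thesis using Znef[of j] z1 z2 by linarith
  qed
  define c where "c = Z A"
  define zA where "zA = inter M Z (comp A)"
  define k where "k = canonE M g A"
  define p where "p = pa M g Z"
  have interDZ: "inter M D Z = D A * zA" for D
  proof -
    have "inter M D Z = inter M Z D" using inter_sym[OF sym] by blast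
    also have "\<dots> = (\<Sum>j\<in>UNIV. D j * inter M Z (comp j))" by (rule inter_expand2)
    also have "\<dots> = (\<Sum>j\<in>UNIV. if j = A then D A * zA else 0)"
      by (rule sum.cong) (auto simp: zj0 zA_def)
    finally show ?thesis by simp
  qed
  have ZZ: "inter M Z Z = c * zA" using interDZ[of Z] c_def by simp
  have cz: "c * zA = - d" using ZZ assms(4) by simp
  have c0: "c > 0" using A c_def by simp
  have d23: "d = 2 \<or> d = 3" using assms(5) by simp
  have zAle: "zA \<le> -1"
  proof -
    have "zA \<le> 0" using Znef zA_def by simp
    moreover have "zA \<noteq> 0" using cz d23 by auto
    ultimately show ?thesis by simp
  qed
  have cd: "c \<le> d"
  proof -
    have "c * zA \<le> c * (-1)" using zAle c0 by (intro mult_left_mono) auto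
    then show ?thesis using cz by simp
  qed
  have p1: "p \<ge> 1" using assms(6) p_def by simp
  have pZ: "2 * (p - 1) = c * k - d"
    using pa_2[OF sym, of g Z] unfolding p_def ZZ canonA[of Z] c_def k_def using cz c_def by simp
  define q where "q = (p - 1) div d"
  have qfl: "\<lfloor>real_of_int (pa M g Z - 1) / real_of_int d\<rfloor> = q"
    unfolding q_def p_def by (rule floor_divide_of_int_eq)
  define V where "V = pa M g (\<lambda>i. (q + 1) * Z i)"
  have dpos: "d > 0" using d23 by auto
  have q0: "q \<ge> 0" unfolding q_def using p1 dpos pos_imp_zdiv_nonneg_iff by auto
  have V2: "2 * (V - 1) = -(q+1)*(q+1)*d + (q+1)*c*k"
    using pa_2[OF sym, of g "\<lambda>i. (q + 1) * Z i"] unfolding V_def inter_scale canonD_scale ZZ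
      canonA[of Z] c_def[symmetric] k_def[symmetric] using cz
    by (simp add: algebra_simps)
  have bound: "pa M g D \<le> V" for D
  proof -
    define a where "a = D A"
    define X where "X = inter M D D"
    define D' where "D' = (\<lambda>i. c * D i + (-a) * Z i)"
    have "inter M D' D' = c*c*X + 2*c*(-a)*(a * zA) + a*a*(c*zA)"
      unfolding D'_def inter_quad[OF sym] interDZ ZZ X_def a_def c_def by simp
    also have "\<dots> = c*c*X - 2*a*a*(c*zA) + a*a*(c*zA)" by (simp add: algebra_simps)
    also have "\<dots> = c*c*X + a*a*d" using cz by simp
    finally have neg: "c*c*X + a*a*d \<le> 0" using inter_le0[OF ex, of D'] by simp
    have P2: "2 * (pa M g D - 1) \<le> X + a * k"
      unfolding pa_def X_def a_def k_def canonA[of D] by simp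
    have "c = 1 \<or> (c = 2 \<and> d = 2) \<or> (c = 3 \<and> d = 3)"
    proof -
      have "c \<noteq> 2 \<or> d \<noteq> 3"
      proof (rule ccontr)
        assume "\<not> (c \<noteq> 2 \<or> d \<noteq> 3)"
        then have "2 * zA = -3" using cz by simp
        then show False by presburger
      qed
      then show ?thesis using c0 cd d23 by auto
    qed
    moreover have "2 * (pa M g D - 1) \<le> 2 * (V - 1)" if "c = 1"
    proof -
      have "k = 2*p - 2 + d" using pZ that by simp
      then show ?thesis using ar1[OF dpos p1 q_def, of X a "pa M g D"] neg P2 that V2 by simp
    qed
    moreover have "2 * (pa M g D - 1) \<le> 2 * (V - 1)" if "c = 2" "d = 2"
    proof -
      have "4*X + a*a*2 \<le> 0" using neg that by simp
      then show ?thesis using ar2[OF p1 _ _ P2, of q] q_def pZ that V2 by (simp add: algebra_simps)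
    qed
    moreover have "2 * (pa M g D - 1) \<le> 2 * (V - 1)" if "c = 3" "d = 3"
    proof -
      have "9*X + a*a*3 \<le> 0" using neg that by simp
      then show ?thesis using ar3[OF p1 _ _ P2, of q] q_def pZ that V2 by (simp add: algebra_simps)
    qed
    ultimately have "2 * (pa M g D - 1) \<le> 2 * (V - 1)" by blast
    then show ?thesis by simp
  qed
  have Vin: "V \<in> pa M g ` {D. pos_cycle D}"
  proof -
    have "pos_cycle (\<lambda>i. (q + 1) * Z i)"
      unfolding pos_cycle_def using q0 Zpos
      by (auto simp: fun_eq_iff intro!: mult_nonneg_nonneg less_imp_le) (metis less_irrefl)
    then show ?thesis unfolding V_def by blast
  qed
  have S: "sing_pa M g = V"
    unfolding sing_pa_def by (rule cSup_eq_maximum[OF Vin]) (auto simp: bound)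
  have ck: "c * k = 2*p - 2 + d" using pZ by simp
  have "real_of_int V = real_of_int d / 2 * ((2 * real_of_int p - 2) / real_of_int d - real_of_int q)
        * (real_of_int q + 1) + 1"
  proof -
    have e: "(q+1)*c*k = (q+1)*(2*p-2+d)" using ck by (simp add: mult.assoc)
    have "2 * (V - 1) = -(q+1)*(q+1)*d + (q+1)*(2*p-2+d)" using V2 e by simp
    then have "2 * (V - 1) = (q+1) * (2*p - 2 - q*d)" by (simp add: algebra_simps)
    then have h1: "2 * (real_of_int V - 1) = (real_of_int q+1) * (2*real_of_int p - 2 - real_of_int q*real_of_int d)"
    proof -
      have "real_of_int (2 * (V - 1)) = real_of_int ((q+1) * (2*p - 2 - q*d))" using \<open>2 * (V - 1) = (q+1) * (2*p - 2 - q*d)\<close> by simp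
      then show ?thesis by simp
    qed
    have h2: "real_of_int d / 2 * ((2 * real_of_int p - 2) / real_of_int d - real_of_int q)
        = (2*real_of_int p - 2 - real_of_int q*real_of_int d) / 2"
      using dpos by (simp add: field_simps)
    show ?thesis unfolding h2 using h1 by (simp add: field_simps)
  qed
  then show ?thesis using S unfolding qfl V_def p_def by simp
qed

end
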